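(* For every integer $N$, in $\bar k[[t]]$: $\Omega^{(N)}/\Omega^{(-1)}=-\sum_{n\ge0}\Psi_N\big(1/T^{n+1}\big)t^n$ if $N\ge0$, and $\Omega^{(N)}/\Omega^{(-1)}=\prod_{i=1}^{|N|-1}\big(t-T^{q^{-i}}\big)$ if $N<0$.
   Context: $A=\mathbb F_q[T]$, $A_+$ its monic elements, $\bar k$ the algebraic closure of $\mathbb F_q(T)$ in $\mathbb C_\infty$ (completion of an algebraic closure of $\mathbb F_q((1/T))$, $|T|_\infty=q$), $\tilde T$ a fixed $(q-1)$-th root of $-T$. $\Omega(t)=\tilde T^{-q}\prod_{i\ge1}(1-t/T^{q^i})$ (its coefficients lie in $\bar k$). For $g=\sum a_it^i$ and $n\in\mathbb Z$, $g^{(n)}=\sum a_i^{q^n}t^i$. For integers $N\ge0$, $\Psi_N(z)=\prod_{a\in A,\deg a<N}(z-a)\big/\prod_{a\in A_+,\deg a=N}a$ (so $\Psi_0(z)=z$). *)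

theory Defs
  imports "HOL-Computational_Algebra.Computational_Algebra" "HOL-Library.Cardinality"
begin

text \<open>Abstract model of the ambient field C_infinity: a field 'K with a real-valued
  absolute value absK which is non-archimedean and complete, algebraically closed,
  containing a copy of F_q (a finite field type 'f, embedded by a ring hom iota)
  and the element T with absK T = q.\<close>

definition conv_abs :: "('K::field \<Rightarrow> real) \<Rightarrow> (nat \<Rightarrow> 'K) \<Rightarrow> 'K \<Rightarrow> bool" where
  "conv_abs absK s L \<longleftrightarrow> ((\<lambda>m. absK (s m - L)) \<longlonglongrightarrow> 0)"

definition lim_abs :: "('K::field \<Rightarrow> real) \<Rightarrow> (nat \<Rightarrow> 'K) \<Rightarrow> 'K" where
  "lim_abs absK s = (THE L. conv_abs absK s L)"

definition Cinf_setting :: "('f::{field,finite} \<Rightarrow> 'K::field) \<Rightarrow> 'K \<Rightarrow> ('K \<Rightarrow> real) \<Rightarrow> bool" where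
  "Cinf_setting \<iota> T absK \<longleftrightarrow>
     \<iota> 0 = 0 \<and> \<iota> 1 = 1 \<and> (\<forall>a b. \<iota> (a + b) = \<iota> a + \<iota> b) \<and> (\<forall>a b. \<iota> (a * b) = \<iota> a * \<iota> b) \<and>
     (\<forall>x. absK x \<ge> 0) \<and> (\<forall>x. absK x = 0 \<longleftrightarrow> x = 0) \<and>
     (\<forall>x y. absK (x * y) = absK x * absK y) \<and>
     (\<forall>x y. absK (x + y) \<le> max (absK x) (absK y)) \<and>
     (\<forall>s. (\<forall>e>0. \<exists>M. \<forall>m\<ge>M. \<forall>n\<ge>M. absK (s m - s n) < e) \<longrightarrow> (\<exists>L. conv_abs absK s L)) \<and>
     (\<forall>p :: 'K poly. degree p > 0 \<longrightarrow> (\<exists>x. poly p x = 0)) \<and>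
     absK T = real (card (UNIV :: 'f set))"

definition frob :: "nat \<Rightarrow> int \<Rightarrow> 'K::field \<Rightarrow> 'K" where
  "frob q n x = (if n \<ge> 0 then x ^ (q ^ nat n) else (THE y. y ^ (q ^ nat (- n)) = x))"

definition twist :: "nat \<Rightarrow> int \<Rightarrow> 'K::field fps \<Rightarrow> 'K fps" where
  "twist q n g = Abs_fps (\<lambda>i. frob q n (g $ i))"

definition Omega :: "('K::field \<Rightarrow> real) \<Rightarrow> nat \<Rightarrow> 'K \<Rightarrow> 'K \<Rightarrow> 'K fps" where
  "Omega absK q T Tt = fps_const (inverse (Tt ^ q)) *
     Abs_fps (\<lambda>n. lim_abs absK (\<lambda>m. (\<Prod>i=1..m. 1 - fps_const (inverse (T ^ (q ^ i))) * fps_X) $ n))"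

text \<open>Elements of A = F_q[T] inside 'K.\<close>
definition evA :: "('f::field \<Rightarrow> 'K::field) \<Rightarrow> 'K \<Rightarrow> 'f poly \<Rightarrow> 'K" where
  "evA \<iota> T a = poly (map_poly \<iota> a) T"

text \<open>Psi_N(z) = prod_{a in A, deg a < N} (z - a) / prod_{a in A_+, deg a = N} a
  (deg 0 = -infinity, so the zero polynomial is always included).\<close>
definition Psi :: "('f::{field,finite} \<Rightarrow> 'K::field) \<Rightarrow> 'K \<Rightarrow> nat \<Rightarrow> 'K \<Rightarrow> 'K" where
  "Psi \<iota> T N z =
     (\<Prod>a\<in>{a :: 'f poly. a = 0 \<or> degree a < N}. z - evA \<iota> T a) /
     (\<Prod>a\<in>{a :: 'f poly. lead_coeff a = 1 \<and> degree a = N}. evA \<iota> T a)"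

end

theory Submission
  imports Defs
begin


locale cs =
  fixes \<iota> :: "'f::{field,finite} \<Rightarrow> 'K::field" and T :: 'K and absK :: "'K \<Rightarrow> real"
    and q :: nat
  assumes CS: "Cinf_setting \<iota> T absK" and qdef: "q = CARD('f)"
begin

lemma CSD: "\<iota> 0 = 0 \<and> \<iota> 1 = 1 \<and> (\<forall>a b. \<iota> (a + b) = \<iota> a + \<iota> b) \<and> (\<forall>a b. \<iota> (a * b) = \<iota> a * \<iota> b) \<and>
     (\<forall>x. absK x \<ge> 0) \<and> (\<forall>x. absK x = 0 \<longleftrightarrow> x = 0) \<and>
     (\<forall>x y. absK (x * y) = absK x * absK y) \<and>
     (\<forall>x y. absK (x + y) \<le> max (absK x) (absK y)) \<and>
     (\<forall>s. (\<forall>e>0. \<exists>M. \<forall>m\<ge>M. \<forall>n\<ge>M. absK (s m - s n) < e) \<longrightarrow> (\<exists>L. conv_abs absK s L)) \<and>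
     (\<forall>p :: 'K poly. degree p > 0 \<longrightarrow> (\<exists>x. poly p x = 0)) \<and>
     absK T = real q"
  using CS unfolding Cinf_setting_def qdef .

lemma i0[simp]: "\<iota> 0 = 0" using CSD by (elim conjE)
lemma i1[simp]: "\<iota> 1 = 1" using CSD by (elim conjE)
lemma iadd[simp]: "\<iota> (a + b) = \<iota> a + \<iota> b" using CSD by (elim conjE) (erule allE)+
lemma imult[simp]: "\<iota> (a * b) = \<iota> a * \<iota> b" using CSD by (elim conjE) (erule allE)+
lemma abs_nn: "absK x \<ge> 0" using CSD by (elim conjE) (erule allE)+
lemma abs0: "absK x = 0 \<longleftrightarrow> x = 0" using CSD by (elim conjE) (erule allE)+
lemma abs_mult: "absK (x * y) = absK x * absK y" using CSD by (elim conjE) (erule allE)+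
lemma abs_ultra: "absK (x + y) \<le> max (absK x) (absK y)" using CSD by (elim conjE) (erule allE)+
lemma complete: "(\<forall>e>0. \<exists>M. \<forall>m\<ge>M. \<forall>n\<ge>M. absK (s m - s n) < e) \<Longrightarrow> (\<exists>L. conv_abs absK s L)"
  using CSD by (elim conjE) (erule allE, erule mp)
lemma algc: fixes p :: "'K poly" assumes "degree p > 0" shows "\<exists>x. poly p x = 0"
proof -
  have "\<forall>p :: 'K poly. degree p > 0 \<longrightarrow> (\<exists>x. poly p x = 0)" using CSD by (elim conjE)
  then show ?thesis using assms by blast
qed
lemma absT: "absK T = real q" using CSD by (elim conjE)

lemma iminus[simp]: "\<iota> (- a) = - \<iota> a"
  by (metis add.right_inverse add_eq_0_iff2 i0 iadd)
lemma idiff[simp]: "\<iota> (a - b) = \<iota> a - \<iota> b"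
  by (metis diff_conv_add_uminus iadd iminus)
lemma ipow[simp]: "\<iota> (a ^ n) = \<iota> a ^ n"
  by (induction n) auto
lemma iinj: "\<iota> a = \<iota> b \<Longrightarrow> a = b"
proof (rule ccontr)
  assume "\<iota> a = \<iota> b" "a \<noteq> b"
  then have "\<iota> (a - b) = 0" by simp
  then have "\<iota> ((a - b) * inverse (a - b)) = 0" by simp
  with \<open>a \<noteq> b\<close> show False by simp
qed
lemma inj_i: "inj \<iota>" using iinj by (auto intro: injI)

lemma q_ge2: "q \<ge> 2"
proof -
  have "card {0::'f, 1} \<le> q" unfolding qdef by (rule card_mono) auto
  then show ?thesis by simp
qed

lemma f_pow_card: "(x::'f) ^ q = x"
proof (cases "x = 0")
  case False
  have "x * (\<Prod>y\<in>UNIV-{0}. x * y) = x * x ^ (q - 1) * \<Prod>(UNIV-{0::'f})"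
    by (simp add: prod.distrib mult_ac qdef)
  also have "x * x ^ (q - 1) = x ^ Suc (q - 1)"
    by (subst power_Suc) auto
  also have "Suc (q - 1) = q"
    using q_ge2 by simp
  also have "(\<Prod>y\<in>UNIV-{0}. x * y) = (\<Prod>y\<in>UNIV-{0}. y)"
    by (rule prod.reindex_bij_witness[of _ "\<lambda>y. y / x" "\<lambda>y. x * y"]) (use False in auto)
  finally show ?thesis
    by simp
qed (use q_ge2 in auto)

lemma f_pow_card_pow: "(x::'f) ^ (q ^ n) = x"
  by (induction n) (simp_all add: f_pow_card power_mult)

lemma i_pow_card_pow: "\<iota> x ^ (q ^ n) = \<iota> x"
  by (metis f_pow_card_pow ipow)

lemma few_roots:
  fixes R :: "'K poly"
  assumes "degree R \<le> q" "coeff R q = 0" "\<And>c. poly R (\<iota> c) = 0"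
  shows "R = 0"
proof (rule ccontr)
  assume R: "R \<noteq> 0"
  have "degree R \<noteq> q" using assms(2) R by (metis leading_coeff_0_iff)
  with assms(1) have dl: "degree R < q" by simp
  have "range \<iota> \<subseteq> {x. poly R x = 0}" using assms(3) by auto
  then have "card (range \<iota>) \<le> card {x. poly R x = 0}"
    using poly_roots_finite[OF R] by (intro card_mono) auto
  also have "\<dots> \<le> degree R" by (rule card_poly_roots_bound[OF R])
  finally have "q \<le> degree R" using card_image[OF inj_i] by (simp add: qdef)
  with dl show False by simp
qed

lemma frob1: "(x + 1) ^ q = x ^ q + (1::'K)"
proof -
  define R :: "'K poly" where "R = [:1,1:] ^ q - monom 1 q - 1"
  have d1: "degree ([:1,1:] ^ q :: 'K poly) = q" by (rule degree_linear_power)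
  have d2: "degree (monom (1::'K) q) = q" by (simp add: degree_monom_eq)
  have "degree ([:1,1:] ^ q - monom 1 q :: 'K poly) \<le> q"
    using degree_diff_le[of "[:1,1:] ^ q :: 'K poly" q "monom 1 q"] d1 d2 by simp
  then have "degree R \<le> q" unfolding R_def
    using degree_diff_le[of "[:1,1:] ^ q - monom 1 q :: 'K poly" q 1] by simp
  moreover have "coeff R q = 0" unfolding R_def using q_ge2
    by (simp add: coeff_linear_power)
  moreover have "poly R (\<iota> c) = 0" for c
  proof -
    have "(\<iota> c + 1) ^ q = \<iota> ((c + 1) ^ q)" by simp
    also have "\<dots> = \<iota> c + 1" by (simp only: f_pow_card iadd i1)
    finally have e: "(\<iota> c + 1) ^ q = \<iota> c + 1" .
    have "\<iota> c ^ q = \<iota> c" by (simp only: f_pow_card flip: ipow)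
    then show ?thesis unfolding R_def using e
      by (simp add: poly_monom add.commute)
  qed
  ultimately have "R = 0" by (rule few_roots)
  then have "poly R x = 0" by simp
  then show ?thesis unfolding R_def by (simp add: poly_monom add.commute algebra_simps)
qed

lemma powq_add: "(x + y) ^ q = x ^ q + (y::'K) ^ q"
proof (cases "y = 0")
  case True then show ?thesis using q_ge2 by (simp add: power_0_left)
next
  case False
  have "x + y = y * (x / y + 1)" using False by (simp add: distrib_left)
  then have "(x + y) ^ q = (y * (x / y + 1)) ^ q" by simp
  also have "\<dots> = y ^ q * ((x/y) ^ q + 1)" by (simp add: power_mult_distrib frob1)
  also have "\<dots> = (y * (x/y))^q + y^q" by (simp only: power_mult_distrib distrib_left mult_1_right)
  also have "\<dots> = x ^ q + y ^ q" using False by simp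
  finally show ?thesis .
qed

lemma pow_q_Suc: "(x::'K) ^ (q ^ Suc n) = (x ^ (q ^ n)) ^ q"
  by (simp only: power_Suc mult.commute[of q] power_mult)

lemma frobn_add: "(x + y) ^ (q ^ n) = x ^ (q ^ n) + (y::'K) ^ (q ^ n)"
proof (induction n)
  case 0 then show ?case by simp
next
  case (Suc n) then show ?case by (simp only: pow_q_Suc powq_add)
qed

lemma frobn_minus1: "(-1::'K) ^ (q ^ n) = -1"
proof -
  have qn: "q ^ n \<noteq> 0" using q_ge2 by simp
  have "(1 + (-1::'K)) ^ (q ^ n) = 1 ^ (q ^ n) + (-1) ^ (q ^ n)" by (rule frobn_add)
  moreover have "(0::'K) ^ (q ^ n) = 0" using qn by simp
  ultimately have "1 + (-1::'K) ^ (q ^ n) = 0" by simp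
  then show ?thesis by (simp add: eq_neg_iff_add_eq_0 add.commute)
qed

lemma frobn_minus: "(- x::'K) ^ (q ^ n) = - (x ^ (q ^ n))"
proof -
  have "(- x) ^ (q ^ n) = ((- 1) * x) ^ (q ^ n)" by simp
  also have "\<dots> = (- 1) ^ (q ^ n) * x ^ (q ^ n)" by (rule power_mult_distrib)
  also have "\<dots> = - (x ^ (q ^ n))" by (simp only: frobn_minus1) simp
  finally show ?thesis .
qed

lemma frobn_diff: "(x - y) ^ (q ^ n) = x ^ (q ^ n) - (y::'K) ^ (q ^ n)"
  by (simp only: diff_conv_add_uminus frobn_add frobn_minus)

lemma frobn_sum: "(\<Sum>i\<in>A. f i) ^ (q ^ n) = (\<Sum>i\<in>A. (f i :: 'K) ^ (q ^ n))"
  using q_ge2 by (induction A rule: infinite_finite_induct) (simp_all add: frobn_add power_0_left)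

lemma frobn_inj: assumes "(x::'K) ^ (q ^ n) = y ^ (q ^ n)" shows "x = y"
proof -
  have "(x - y) ^ (q ^ n) = 0" by (simp only: frobn_diff assms) simp
  then show ?thesis by simp
qed

lemma frobn_surj: "\<exists>y::'K. y ^ (q ^ n) = x"
proof -
  have qn: "q ^ n > 0" using q_ge2 by simp
  define p :: "'K poly" where "p = monom 1 (q ^ n) - [:x:]"
  have "coeff p (q ^ n) = 1" unfolding p_def using qn by (cases "q ^ n") simp_all
  then have "degree p \<ge> q ^ n" by (intro le_degree) simp
  with qn obtain y where "poly p y = 0" using algc by force
  then show ?thesis unfolding p_def by (auto simp: poly_monom)
qed

end



context cs
begin

lemma frob_nat[simp]: "frob q (int k) x = x ^ (q ^ k)"
  by (simp add: frob_def)

lemma frob_neg_iff: "frob q (- int k) x = y \<longleftrightarrow> y ^ (q ^ k) = (x::'K)"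
proof (cases "k = 0")
  case True then show ?thesis by (auto simp: frob_def)
next
  case False
  have ex: "\<exists>!y. y ^ (q ^ k) = x" using frobn_surj frobn_inj by blast
  have fe: "frob q (- int k) x = (THE y. y ^ (q ^ k) = x)" using False by (simp add: frob_def)
  show ?thesis
  proof
    assume "frob q (- int k) x = y"
    then show "y ^ (q ^ k) = x" using theI'[OF ex] fe by simp
  next
    assume "y ^ (q ^ k) = x"
    then show "frob q (- int k) x = y" using the1_equality[OF ex] fe by simp
  qed
qed

lemma frob_neg_pow: "(frob q (- int k) x) ^ (q ^ k) = (x::'K)"
  using frob_neg_iff by blast

lemma int_cases_pm: obtains k where "N = int k" | k where "N = - int k"
  by (metis int_cases2)

lemma frob_add: "frob q N (x + y) = frob q N x + frob q N (y::'K)"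
proof (cases N rule: int_cases_pm)
  case (1 k) then show ?thesis by (simp add: frobn_add)
next
  case (2 k) then show ?thesis by (simp add: frob_neg_iff frobn_add frob_neg_pow)
qed

lemma frob_mult: "frob q N (x * y) = frob q N x * frob q N (y::'K)"
proof (cases N rule: int_cases_pm)
  case (1 k) then show ?thesis by (simp add: power_mult_distrib)
next
  case (2 k) then show ?thesis by (simp add: frob_neg_iff power_mult_distrib frob_neg_pow)
qed

lemma frob_0[simp]: "frob q N (0::'K) = 0"
proof -
  have "frob q N (0 + 0) = frob q N 0 + frob q N (0::'K)" by (rule frob_add)
  then have "frob q N 0 + frob q N 0 = frob q N 0 + (0::'K)" by simp
  then show ?thesis by (rule add_left_imp_eq)
qed

lemma frob_1[simp]: "frob q N (1::'K) = 1"
proof (cases N rule: int_cases_pm)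
  case (1 k) then show ?thesis by simp
next
  case (2 k) then show ?thesis by (simp add: frob_neg_iff)
qed

lemma frob_minus: "frob q N (- x) = - frob q N (x::'K)"
proof -
  have "frob q N (x + - x) = frob q N x + frob q N (- x)" by (rule frob_add)
  then have "frob q N x + frob q N (- x) = 0" by simp
  then show ?thesis by (simp add: eq_neg_iff_add_eq_0 add.commute)
qed

lemma frob_diff: "frob q N (x - y) = frob q N x - frob q N (y::'K)"
  by (simp only: diff_conv_add_uminus frob_add frob_minus)

lemma frob_eq0_iff[simp]: "frob q N (x::'K) = 0 \<longleftrightarrow> x = 0"
proof (cases N rule: int_cases_pm)
  case (1 k) then show ?thesis using q_ge2 by simp
next
  case (2 k) then show ?thesis using q_ge2 by (auto simp: frob_neg_iff)
qed

lemma frob_inverse: "frob q N (inverse x) = inverse (frob q N (x::'K))"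
proof (cases "x = 0")
  case True then show ?thesis by simp
next
  case False
  have "frob q N x * frob q N (inverse x) = 1"
    by (simp only: frob_mult[symmetric]) (simp add: False)
  then show ?thesis by (rule inverse_unique[symmetric])
qed

lemma frob_power: "frob q N (x ^ n) = frob q N (x::'K) ^ n"
  by (induction n) (simp_all add: frob_mult)

lemma frob_sum: "frob q N (\<Sum>i\<in>A. f i) = (\<Sum>i\<in>A. frob q N (f i :: 'K))"
  by (induction A rule: infinite_finite_induct) (simp_all add: frob_add)

lemma frob_prod: "frob q N (\<Prod>i\<in>A. f i) = (\<Prod>i\<in>A. frob q N (f i :: 'K))"
  by (induction A rule: infinite_finite_induct) (simp_all add: frob_mult)

lemma frob_comp: "frob q s (x ^ (q ^ b)) = frob q (s + int b) (x::'K)"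
proof (cases s rule: int_cases_pm)
  case (1 k)
  have "frob q s (x ^ (q ^ b)) = (x ^ (q ^ b)) ^ (q ^ k)" using 1 by simp
  also have "\<dots> = x ^ (q ^ (k + b))" by (simp add: power_add power_mult[symmetric] mult.commute)
  also have "\<dots> = frob q (s + int b) x" using 1 by (simp only: frob_nat of_nat_add[symmetric])
  finally show ?thesis .
next
  case (2 k)
  show ?thesis
  proof (cases "k \<le> b")
    case True
    then have e: "- int k + int b = int (b - k)" by simp
    have "(x ^ (q ^ (b - k))) ^ (q ^ k) = x ^ (q ^ b)"
      using True by (simp add: power_mult[symmetric] power_add[symmetric])
    then show ?thesis by (simp only: 2 e frob_nat frob_neg_iff)
  next
    case False
    then have e: "- int k + int b = - int (k - b)" by simp
    have "(frob q (- int (k - b)) x) ^ (q ^ k) = x ^ (q ^ b)"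
    proof -
      have "q ^ k = q ^ (k - b) * q ^ b" using False by (simp add: power_add[symmetric])
      then show ?thesis by (simp only: power_mult frob_neg_pow)
    qed
    then show ?thesis by (simp only: 2 e frob_neg_iff)
  qed
qed

end



context cs
begin

lemma abs_zero[simp]: "absK 0 = 0" using abs0 by simp

lemma abs1[simp]: "absK 1 = 1"
proof -
  have "absK 1 = absK 1 * absK 1" using abs_mult[of 1 1] by simp
  moreover have "absK 1 \<noteq> 0" using abs0 by simp
  ultimately show ?thesis by simp
qed

lemma abs_minus1: "absK (-1) = 1"
proof -
  have "absK (-1) * absK (-1) = 1" using abs_mult[of "-1" "-1"] by simp
  moreover have "absK (-1) \<ge> 0" by (rule abs_nn)
  ultimately show ?thesis by (metis abs_of_nonneg real_sqrt_abs2 real_sqrt_one)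
qed

lemma abs_minus[simp]: "absK (- x) = absK x"
  using abs_mult[of "-1" x] abs_minus1 by simp

lemma abs_diff_sym: "absK (x - y) = absK (y - x)"
proof -
  have "x - y = - (y - x)" by simp
  then show ?thesis by (simp only: abs_minus)
qed

lemma abs_power: "absK (x ^ n) = absK x ^ n"
  by (induction n) (simp_all add: abs_mult)

lemma abs_inverse: "absK (inverse x) = inverse (absK x)"
proof (cases "x = 0")
  case True then show ?thesis using abs0 by simp
next
  case False
  have "absK x * absK (inverse x) = 1" using abs_mult[of x "inverse x"] False by simp
  then show ?thesis by (rule inverse_unique[symmetric])
qed

lemma abs_pos: "x \<noteq> 0 \<Longrightarrow> absK x > 0"
  using abs_nn[of x] abs0[of x] by linarith

lemma abs_add_le: "absK (x + y) \<le> absK x + absK y"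
  using abs_ultra[of x y] abs_nn[of x] abs_nn[of y] by linarith

lemma abs_sum_le: "(\<And>i. i \<in> A \<Longrightarrow> absK (f i) \<le> B) \<Longrightarrow> 0 \<le> B \<Longrightarrow> absK (\<Sum>i\<in>A. f i) \<le> B"
proof (induction A rule: infinite_finite_induct)
  case (infinite A) then show ?case using abs0 by simp
next
  case empty then show ?case using abs0 by simp
next
  case (insert x F)
  then have "absK (f x) \<le> B" "absK (\<Sum>i\<in>F. f i) \<le> B" by auto
  then show ?case using insert(1,2) abs_ultra[of "f x" "\<Sum>i\<in>F. f i"] by simp
qed

lemma abs_strict: assumes "absK x < absK y" shows "absK (x + y) = absK y"
proof -
  have "absK (x + y) \<le> absK y" using abs_ultra[of x y] assms by simp
  moreover have "absK y \<le> max (absK (x + y)) (absK (- x))"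
    using abs_ultra[of "x + y" "- x"] by simp
  ultimately show ?thesis using assms by (auto simp: max_def split: if_splits)
qed

lemma abs_frob_nat: "absK (frob q (int k) x) = absK x ^ (q ^ k)"
  by (simp add: abs_power)

lemma abs_frob_neg: "absK (frob q (- int k) x) = root (q ^ k) (absK x)"
proof -
  have qk: "q ^ k > 0" using q_ge2 by simp
  have h: "absK (frob q (- int k) x) ^ (q ^ k) = absK x"
    by (simp only: abs_power[symmetric] frob_neg_pow)
  show ?thesis by (rule real_root_pos_unique[OF qk abs_nn h, symmetric])
qed

lemma conv_unique: assumes "conv_abs absK s a" "conv_abs absK s b" shows "a = b"
proof -
  have t: "(\<lambda>m. absK (s m - a) + absK (s m - b)) \<longlonglongrightarrow> 0 + 0"
    using assms unfolding conv_abs_def by (intro tendsto_add)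
  have "absK (b - a) \<le> absK (s m - a) + absK (s m - b)" for m
  proof -
    have "b - a = (s m - a) + - (s m - b)" by simp
    then have "absK (b - a) = absK ((s m - a) + - (s m - b))" by simp
    also have "\<dots> \<le> absK (s m - a) + absK (- (s m - b))" by (rule abs_add_le)
    finally show ?thesis using abs_diff_sym[of b "s m"] by simp
  qed
  then have "absK (b - a) \<le> 0" using t by (intro LIMSEQ_le_const) auto
  then have "absK (b - a) = 0" using abs_nn[of "b - a"] by linarith
  then show ?thesis using abs0 by simp
qed

lemma lim_abs_eq: "conv_abs absK s L \<Longrightarrow> lim_abs absK s = L"
  unfolding lim_abs_def using conv_unique by blast

lemma conv_const: "conv_abs absK (\<lambda>m. c) c"
  unfolding conv_abs_def using abs0 by simp

lemma conv_null_cmp: assumes "\<And>m. absK (t m - b) \<le> g m" "g \<longlonglongrightarrow> 0" shows "conv_abs absK t b"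
  unfolding conv_abs_def
proof (rule tendsto_sandwich[OF _ _ tendsto_const assms(2)])
  show "\<forall>\<^sub>F x in sequentially. 0 \<le> absK (t x - b)" using abs_nn by simp
  show "\<forall>\<^sub>F x in sequentially. absK (t x - b) \<le> g x" using assms(1) by simp
qed

lemma conv_add: assumes "conv_abs absK s a" "conv_abs absK t b"
  shows "conv_abs absK (\<lambda>m. s m + t m) (a + b)"
proof (rule conv_null_cmp)
  show "(\<lambda>m. absK (s m - a) + absK (t m - b)) \<longlonglongrightarrow> 0"
    using assms unfolding conv_abs_def using tendsto_add by fastforce
  fix m
  have "s m + t m - (a + b) = (s m - a) + (t m - b)" by simp
  then show "absK (s m + t m - (a + b)) \<le> absK (s m - a) + absK (t m - b)"
    using abs_add_le[of "s m - a" "t m - b"] by (simp only:)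
qed

lemma conv_cmult: assumes "conv_abs absK s a" shows "conv_abs absK (\<lambda>m. c * s m) (c * a)"
proof -
  have "(\<lambda>m. absK c * absK (s m - a)) \<longlonglongrightarrow> absK c * 0"
    using assms unfolding conv_abs_def by (intro tendsto_mult) auto
  moreover have "absK (c * s m - c * a) = absK c * absK (s m - a)" for m
    by (simp add: abs_mult[symmetric] right_diff_distrib)
  ultimately show ?thesis unfolding conv_abs_def by simp
qed

lemma conv_sum: "finite A \<Longrightarrow> (\<And>i. i \<in> A \<Longrightarrow> conv_abs absK (s i) (a i)) \<Longrightarrow>
   conv_abs absK (\<lambda>m. \<Sum>i\<in>A. s i m) (\<Sum>i\<in>A. a i)"
proof (induction A rule: finite_induct)
  case empty then show ?case using conv_const by simp
next
  case (insert x F)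
  then show ?case by (simp add: conv_add)
qed

lemma conv_shift: "conv_abs absK s a \<Longrightarrow> conv_abs absK (\<lambda>m. s (m + r)) a"
  unfolding conv_abs_def by (rule LIMSEQ_ignore_initial_segment)

lemma conv_frob: assumes "conv_abs absK s a" shows "conv_abs absK (\<lambda>m. frob q N (s m)) (frob q N a)"
proof (cases N rule: int_cases_pm)
  case (1 k)
  have "(\<lambda>m. absK (s m - a) ^ (q ^ k)) \<longlonglongrightarrow> 0 ^ (q ^ k)"
    using assms unfolding conv_abs_def by (intro tendsto_power)
  moreover have "(0::real) ^ (q ^ k) = 0" using q_ge2 by simp
  moreover have "absK (frob q N (s m) - frob q N a) = absK (s m - a) ^ (q ^ k)" for m
    using 1 by (simp only: frob_diff[symmetric] abs_frob_nat)
  ultimately show ?thesis unfolding conv_abs_def by simp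
next
  case (2 k)
  have "(\<lambda>m. root (q ^ k) (absK (s m - a))) \<longlonglongrightarrow> root (q ^ k) 0"
    using assms unfolding conv_abs_def by (intro tendsto_real_root)
  moreover have "absK (frob q N (s m) - frob q N a) = root (q ^ k) (absK (s m - a))" for m
    using 2 by (simp only: frob_diff[symmetric] abs_frob_neg)
  ultimately show ?thesis unfolding conv_abs_def by simp
qed

lemma conv_steps: assumes "\<And>m. absK (s (Suc m) - s m) \<le> (1/2) ^ m"
  shows "\<exists>L. conv_abs absK s L"
proof (rule complete, intro allI impI)
  have A: "absK (s n - s M) \<le> (1/2) ^ M" if "M \<le> n" for M n
    using that
  proof (induction n rule: dec_induct)
    case base then show ?case using abs0 by simp
  next
    case (step n)
    have "(1/2::real) ^ n \<le> (1/2) ^ M" using step(1) by (simp add: power_decreasing)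
    then have "absK (s (Suc n) - s n) \<le> (1/2) ^ M" using assms[of n] by linarith
    moreover have "s (Suc n) - s M = (s (Suc n) - s n) + (s n - s M)" by simp
    ultimately show ?case using abs_ultra[of "s (Suc n) - s n" "s n - s M"] step(3) by simp
  qed
  fix e :: real assume "e > 0"
  then obtain M where M: "(1/2::real) ^ M < e" using real_arch_pow_inv[of e "1/2"] by auto
  show "\<exists>M. \<forall>m\<ge>M. \<forall>n\<ge>M. absK (s m - s n) < e"
  proof (intro exI allI impI)
    fix m n assume "M \<le> m" "M \<le> n"
    have "s m - s n = (s m - s M) + - (s n - s M)" by simp
    then have "absK (s m - s n) \<le> max (absK (s m - s M)) (absK (s n - s M))"
      using abs_ultra[of "s m - s M" "- (s n - s M)"] abs_diff_sym[of "s M" "s n"] by simp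
    also have "\<dots> \<le> (1/2) ^ M" using A \<open>M \<le> m\<close> \<open>M \<le> n\<close> by simp
    finally show "absK (s m - s n) < e" using M by simp
  qed
qed

end



context cs
begin

lemma T_ne0: "T \<noteq> 0"
proof
  assume "T = 0" then have "absK T = 0" by simp
  with absT q_ge2 show False by simp
qed

definition d :: "nat \<Rightarrow> 'K" where "d i = inverse (T ^ (q ^ i))"
definition Pm :: "nat \<Rightarrow> 'K fps" where
  "Pm m = (\<Prod>i=1..m. 1 - fps_const (inverse (T ^ (q ^ i))) * fps_X)"
definition Lf :: "nat \<Rightarrow> 'K" where "Lf n = lim_abs absK (\<lambda>m. Pm m $ n)"

lemma lin_nth: fixes f :: "'K fps" shows "(f * (1 - fps_const c * fps_X)) $ n = f $ n - c * (if n = 0 then 0 else f $ (n - 1))"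
proof -
  have "f * (1 - fps_const c * fps_X) = f - fps_const c * (fps_X * f)"
    by (simp add: right_diff_distrib mult.commute mult.left_commute)
  then show ?thesis by simp
qed

lemma Pm_Suc: "Pm (Suc m) = Pm m * (1 - fps_const (d (Suc m)) * fps_X)"
  unfolding Pm_def d_def by (simp add: prod.nat_ivl_Suc')

lemma abs_d: "absK (d i) = inverse (real q ^ (q ^ i))"
  unfolding d_def by (simp add: abs_inverse abs_power absT)

lemma abs_d_le: "absK (d (Suc m)) \<le> (1/2) ^ m"
proof -
  have i: "Suc m \<le> q ^ Suc m" using q_ge2
    by (metis Suc_leI less_exp order.trans power_mono zero_le_numeral one_less_numeral_iff semiring_norm(76) less_imp_le_nat)
  have "(2::real) ^ m \<le> 2 ^ (q ^ Suc m)" using i by (intro power_increasing) auto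
  also have "\<dots> \<le> real q ^ (q ^ Suc m)" using q_ge2 by (intro power_mono) auto
  finally have "(2::real) ^ m \<le> real q ^ (q ^ Suc m)" .
  then have "inverse (real q ^ (q ^ Suc m)) \<le> inverse (2 ^ m)"
    by (intro le_imp_inverse_le) auto
  then show ?thesis by (simp only: abs_d power_one_over inverse_eq_divide)
qed

lemma abs_d_le1: "absK (d i) \<le> 1"
proof -
  have "1 \<le> real q ^ (q ^ i)" using q_ge2 by (intro one_le_power) auto
  then have "inverse (real q ^ (q ^ i)) \<le> inverse 1" by (intro le_imp_inverse_le) auto
  then show ?thesis by (simp add: abs_d)
qed

lemma Pm_bound: "absK (Pm m $ n) \<le> 1"
proof (induction m arbitrary: n)
  case 0 then show ?case by (simp add: Pm_def)
next
  case (Suc m)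
  have "absK (- (d (Suc m) * (if n = 0 then 0 else Pm m $ (n - 1)))) \<le> 1"
    using abs_d_le1[of "Suc m"] Suc.IH[of "n - 1"] abs_nn
    by (simp add: abs_mult mult_le_one)
  then show ?case using Suc.IH[of n] abs_ultra[of "Pm m $ n" "- (d (Suc m) * (if n = 0 then 0 else Pm m $ (n - 1)))"]
    by (simp add: Pm_Suc lin_nth)
qed

lemma Pm_conv: "conv_abs absK (\<lambda>m. Pm m $ n) (Lf n)"
proof -
  have st: "absK (Pm (Suc m) $ n - Pm m $ n) \<le> (1/2) ^ m" for m
  proof -
    have "Pm (Suc m) $ n - Pm m $ n = - (d (Suc m) * (if n = 0 then 0 else Pm m $ (n - 1)))"
      by (simp add: Pm_Suc lin_nth)
    also have "absK \<dots> \<le> absK (d (Suc m))"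
      using Pm_bound[of m "n - 1"] abs_nn[of "d (Suc m)"]
      by (simp add: abs_mult mult_left_le)
    finally show ?thesis using abs_d_le[of m] by linarith
  qed
  obtain L where "conv_abs absK (\<lambda>m. Pm m $ n) L" using conv_steps[OF st] by blast
  then show ?thesis unfolding Lf_def using lim_abs_eq by simp
qed

lemma Pm_0: "Pm m $ 0 = 1"
  by (induction m) (simp_all add: Pm_Suc lin_nth, simp add: Pm_def)

lemma Lf_0: "Lf 0 = 1"
  using Pm_conv[of 0] conv_const[of 1] conv_unique by (simp add: Pm_0)

lemma Omega_eq: "Omega absK q T Tt = fps_const (inverse (Tt ^ q)) * Abs_fps Lf"
  unfolding Omega_def Lf_def Pm_def ..

lemma twist_nth[simp]: "twist q s f $ n = frob q s (f $ n)"
  by (simp add: twist_def)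

lemma twist_mult: "twist q s (f * g) = twist q s f * twist q s (g :: 'K fps)"
  by (rule fps_ext) (simp add: fps_mult_nth frob_sum frob_mult)

lemma twist_one: "twist q s (1 :: 'K fps) = 1"
  by (rule fps_ext) (simp add: fps_one_nth)

lemma twist_diff: "twist q s (f - g) = twist q s f - twist q s (g :: 'K fps)"
  by (rule fps_ext) (simp add: frob_diff)

lemma twist_const: "twist q s (fps_const c) = fps_const (frob q s (c::'K))"
  by (rule fps_ext) simp

lemma twist_X: "twist q s (fps_X :: 'K fps) = fps_X"
  by (rule fps_ext) (simp add: fps_X_nth)

lemma twist_lin: "twist q s (1 - fps_const c * fps_X) = 1 - fps_const (frob q s c) * (fps_X :: 'K fps)"
  by (simp add: twist_diff twist_one twist_mult twist_const twist_X)

definition g :: "int \<Rightarrow> 'K" where "g j = frob q j (inverse T)"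

definition W :: "int \<Rightarrow> nat \<Rightarrow> 'K fps" where
  "W s m = (\<Prod>i=1..m. 1 - fps_const (g (s + int i)) * fps_X)"

lemma frob_d: "frob q s (inverse (T ^ (q ^ i))) = g (s + int i)"
  unfolding g_def by (simp only: power_inverse[symmetric] frob_comp)

lemma twist_Pm: "twist q s (Pm m) = W s m"
proof (induction m)
  case 0 then show ?case by (simp add: Pm_def W_def twist_one)
next
  case (Suc m)
  have "W s (Suc m) = W s m * (1 - fps_const (g (s + int (Suc m))) * fps_X)"
    unfolding W_def by (simp add: prod.nat_ivl_Suc')
  moreover have "frob q s (d (Suc m)) = g (s + int (Suc m))" by (simp only: d_def frob_d)
  ultimately show ?case using Suc by (simp only: Pm_Suc twist_mult twist_lin)
qed

lemma W_Suc: "W s (Suc m) = W s m * (1 - fps_const (g (s + int (Suc m))) * fps_X)"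
  unfolding W_def by (simp add: prod.nat_ivl_Suc')

lemma W_shift: "W s (m + r) = W s r * W (s + int r) m"
proof (induction m)
  case 0 then show ?case by (simp add: W_def)
next
  case (Suc m)
  have e: "s + int (Suc (m + r)) = s + int r + int (Suc m)" by simp
  have "W s (Suc m + r) = W s (Suc (m + r))" by simp
  also have "\<dots> = W s (m + r) * (1 - fps_const (g (s + int (Suc (m + r)))) * fps_X)"
    by (rule W_Suc)
  also have "\<dots> = W s r * (W (s + int r) m * (1 - fps_const (g (s + int r + int (Suc m))) * fps_X))"
    by (simp only: Suc.IH e mult.assoc)
  also have "\<dots> = W s r * W (s + int r) (Suc m)" by (simp only: W_Suc)
  finally show ?case .
qed

definition Mf :: "int \<Rightarrow> nat \<Rightarrow> 'K" where "Mf s n = frob q s (Lf n)"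

lemma W_conv: "conv_abs absK (\<lambda>m. W s m $ n) (Mf s n)"
proof -
  have "W s m $ n = frob q s (Pm m $ n)" for m
    by (simp only: twist_Pm[symmetric] twist_nth)
  then show ?thesis unfolding Mf_def using conv_frob[OF Pm_conv] by simp
qed

lemma Mf_rel: "Abs_fps (Mf s) = W s r * Abs_fps (Mf (s + int r))"
proof (rule fps_ext)
  fix n
  have c1: "conv_abs absK (\<lambda>m. W s (m + r) $ n) (Mf s n)"
    by (rule conv_shift[OF W_conv])
  have "W s (m + r) $ n = (\<Sum>j=0..n. W s r $ j * W (s + int r) m $ (n - j))" for m
    by (simp only: W_shift fps_mult_nth)
  moreover have "conv_abs absK (\<lambda>m. \<Sum>j=0..n. W s r $ j * W (s + int r) m $ (n - j))
      (\<Sum>j=0..n. W s r $ j * Mf (s + int r) (n - j))"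
    by (intro conv_sum conv_cmult W_conv) auto
  ultimately have c2: "conv_abs absK (\<lambda>m. W s (m + r) $ n) (\<Sum>j=0..n. W s r $ j * Mf (s + int r) (n - j))"
    by simp
  have "Mf s n = (\<Sum>j=0..n. W s r $ j * Mf (s + int r) (n - j))"
    by (rule conv_unique[OF c1 c2])
  then show "Abs_fps (Mf s) $ n = (W s r * Abs_fps (Mf (s + int r))) $ n"
    by (simp add: fps_mult_nth)
qed

lemma twist_Omega: "twist q s (Omega absK q T Tt) = fps_const (frob q s (inverse (Tt ^ q))) * Abs_fps (Mf s)"
  by (rule fps_ext) (simp add: Omega_eq frob_mult Mf_def)

lemma Mf_0: "Mf s 0 = 1"
  by (simp add: Mf_def Lf_0)

end



context cs
begin

abbreviation ev :: "'f poly \<Rightarrow> 'K" where "ev a \<equiv> evA \<iota> T a"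

lemma finite_deg_le: "finite {a :: 'f poly. degree a \<le> N}"
proof -
  let ?h = "\<lambda>a::'f poly. map (coeff a) [0..<Suc N]"
  have "inj_on ?h {a. degree a \<le> N}"
  proof (rule inj_onI)
    fix a b :: "'f poly" assume a: "a \<in> {a. degree a \<le> N}" and b: "b \<in> {a. degree a \<le> N}"
      and e: "?h a = ?h b"
    show "a = b"
    proof (rule poly_eqI)
      fix n show "coeff a n = coeff b n"
      proof (cases "n \<le> N")
        case True
        have "?h a ! n = ?h b ! n" by (simp only: e)
        moreover have "?h a ! n = coeff a n" using True by (simp del: upt_Suc)
        moreover have "?h b ! n = coeff b n" using True by (simp del: upt_Suc)
        ultimately show ?thesis by simp
      next
        case False then show ?thesis using a b by (simp add: coeff_eq_0)
      qed
    qed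
  qed
  moreover have "?h ` {a. degree a \<le> N} \<subseteq> {xs. set xs \<subseteq> UNIV \<and> length xs = Suc N}" by auto
  moreover have "finite {xs. set xs \<subseteq> (UNIV :: 'f set) \<and> length xs = Suc N}"
    by (rule finite_lists_length_eq) simp
  ultimately show ?thesis by (meson finite_imageD finite_subset)
qed

definition V :: "nat \<Rightarrow> 'f poly set" where "V N = {a. a = 0 \<or> degree a < N}"
definition Mon :: "nat \<Rightarrow> 'f poly set" where "Mon N = {a. lead_coeff a = 1 \<and> degree a = N}"

lemma finite_V: "finite (V N)"
  by (rule finite_subset[OF _ finite_deg_le[of N]]) (auto simp: V_def)

lemma finite_Mon: "finite (Mon N)"
  by (rule finite_subset[OF _ finite_deg_le[of N]]) (auto simp: Mon_def)

lemma map_i_add: "map_poly \<iota> (a + b) = map_poly \<iota> a + map_poly \<iota> b"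
  by (rule poly_eqI) (simp add: coeff_map_poly)

lemma map_i_diff: "map_poly \<iota> (a - b) = map_poly \<iota> a - map_poly \<iota> b"
  by (rule poly_eqI) (simp add: coeff_map_poly)

lemma ev_add: "ev (a + b) = ev a + ev b"
  by (simp add: evA_def map_i_add)

lemma ev_diff: "ev (a - b) = ev a - ev b"
  by (simp add: evA_def map_i_diff)

lemma ev_monom: "ev (monom c n) = \<iota> c * T ^ n"
  by (simp add: evA_def map_poly_monom poly_monom)

lemma ev_0: "ev 0 = 0"
  by (simp add: evA_def)

lemma ev_pCons: "ev (pCons c p) = \<iota> c + T * ev p"
  by (simp add: evA_def map_poly_pCons)

lemma abs_i: "c \<noteq> 0 \<Longrightarrow> absK (\<iota> c) = 1"
proof -
  assume c: "c \<noteq> 0"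
  have "c * c ^ (q - 1) = c * 1" using f_pow_card[of c] q_ge2
    by (metis One_nat_def Suc_pred less_le_trans mult.right_neutral power_Suc zero_less_numeral pos2)
  then have "c ^ (q - 1) = 1" using c by simp
  then have "\<iota> c ^ (q - 1) = 1" by (metis ipow i1)
  then have "absK (\<iota> c) ^ (q - 1) = 1 ^ (q - 1)" by (metis abs_power abs1 power_one)
  then show ?thesis using q_ge2 abs_nn by (subst (asm) power_eq_iff_eq_base) auto
qed

lemma abs_ev: "a \<noteq> 0 \<Longrightarrow> absK (ev a) = real q ^ degree a"
proof (induction a rule: pCons_induct)
  case 0 then show ?case by simp
next
  case (pCons c p)
  show ?case
  proof (cases "p = 0")
    case True
    then have "c \<noteq> 0" using pCons by simp
    then show ?thesis using True by (simp add: ev_pCons ev_0 abs_i)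
  next
    case False
    have h: "absK (T * ev p) = real q ^ Suc (degree p)"
      using pCons.IH[OF False] by (simp add: abs_mult absT)
    have "absK (\<iota> c) \<le> 1" by (cases "c = 0") (simp_all add: abs_i)
    moreover have "1 < real q ^ Suc (degree p)"
      using q_ge2 by (intro one_less_power) auto
    ultimately have "absK (\<iota> c) < absK (T * ev p)" using h by simp
    then have "absK (\<iota> c + T * ev p) = absK (T * ev p)" by (rule abs_strict)
    then show ?thesis using h False by (simp add: ev_pCons degree_pCons_eq)
  qed
qed

lemma ev_nonzero: assumes a: "a \<noteq> 0" shows "ev a \<noteq> 0"
proof
  assume e: "ev a = 0"
  have "absK (ev a) = real q ^ degree a" by (rule abs_ev[OF a])
  then have "real q ^ degree a = 0" using e by simp
  then show False using q_ge2 by simp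
qed

end



context cs
begin

definition qlin :: "nat \<Rightarrow> ('K \<Rightarrow> 'K) \<Rightarrow> bool" where
  "qlin N f \<longleftrightarrow> (\<exists>b. \<forall>z. f z = (\<Sum>i\<le>N. b i * z ^ (q ^ i)))"

lemma qlin_add: assumes "qlin N f" shows "f (x + y) = f x + f y"
proof -
  obtain b where b: "\<And>z. f z = (\<Sum>i\<le>N. b i * z ^ (q ^ i))" using assms unfolding qlin_def by blast
  show ?thesis by (simp only: b frobn_add distrib_left sum.distrib)
qed

lemma qlin_smul: assumes "qlin N f" shows "f (\<iota> c * y) = \<iota> c * f y"
proof -
  obtain b where b: "\<And>z. f z = (\<Sum>i\<le>N. b i * z ^ (q ^ i))" using assms unfolding qlin_def by blast
  show ?thesis by (simp only: b power_mult_distrib i_pow_card_pow sum_distrib_left mult.left_commute)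
qed

lemma qlin_minus: assumes "qlin N f" shows "f (- y) = - f y"
proof -
  have "f (\<iota> (-1) * y) = \<iota> (-1) * f y" by (rule qlin_smul[OF assms])
  then show ?thesis by simp
qed

lemma qlin_diff: assumes "qlin N f" shows "f (x - y) = f x - f y"
  by (simp only: diff_conv_add_uminus qlin_add[OF assms] qlin_minus[OF assms])

lemma qlin_step: assumes "qlin N f" shows "qlin (Suc N) (\<lambda>z. f z ^ q - C * f z)"
proof -
  obtain b where b: "\<And>z. f z = (\<Sum>i\<le>N. b i * z ^ (q ^ i))" using assms unfolding qlin_def by blast
  define b' where "b' i = (if i = 0 then 0 else b (i - 1) ^ q) - C * (if i \<le> N then b i else 0)" for i
  have "f z ^ q - C * f z = (\<Sum>i\<le>Suc N. b' i * z ^ (q ^ i))" for z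
  proof -
    have fs: "(\<Sum>i\<le>N. b i * z ^ (q ^ i)) ^ q = (\<Sum>i\<le>N. (b i * z ^ (q ^ i)) ^ q)"
      using frobn_sum[of "\<lambda>i. b i * z ^ (q ^ i)" "{..N}" 1] by simp
    have "f z ^ q = (\<Sum>i\<le>N. b i * z ^ (q ^ i)) ^ q" by (simp only: b)
    also have "\<dots> = (\<Sum>i\<le>N. (b i * z ^ (q ^ i)) ^ q)" by (rule fs)
    also have "\<dots> = (\<Sum>i\<le>N. b i ^ q * z ^ (q ^ Suc i))"
      by (simp only: power_mult_distrib pow_q_Suc)
    also have "\<dots> = (\<Sum>i\<le>Suc N. (if i = 0 then 0 else b (i - 1) ^ q) * z ^ (q ^ i))"
      by (simp only: sum.atMost_Suc_shift) simp
    finally have 1: "f z ^ q = (\<Sum>i\<le>Suc N. (if i = 0 then 0 else b (i - 1) ^ q) * z ^ (q ^ i))" .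
    have 2: "f z = (\<Sum>i\<le>Suc N. (if i \<le> N then b i else 0) * z ^ (q ^ i))"
      by (simp add: b)
    have "f z ^ q - C * f z = (\<Sum>i\<le>Suc N. (if i = 0 then 0 else b (i - 1) ^ q) * z ^ (q ^ i))
       - C * (\<Sum>i\<le>Suc N. (if i \<le> N then b i else 0) * z ^ (q ^ i))"
      by (subst 1, subst 2, rule refl)
    also have "\<dots> = (\<Sum>i\<le>Suc N. b' i * z ^ (q ^ i))"
      unfolding b'_def by (simp add: sum_subtractf sum_distrib_left algebra_simps)
    finally show ?thesis .
  qed
  then show ?thesis unfolding qlin_def by blast
qed

lemma prod_i_lin: "(\<Prod>c\<in>UNIV. x - \<iota> c) = x ^ q - x"
proof -
  define R :: "'K poly" where "R = (\<Prod>c\<in>UNIV. [:- \<iota> c, 1:]) - (monom 1 q - [:0, 1:])"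
  have dP: "degree (\<Prod>c\<in>(UNIV::'f set). [:- \<iota> c, 1:]) = q"
    by (subst degree_prod_eq_sum_degree) (auto simp: qdef)
  have lP: "lead_coeff (\<Prod>c\<in>(UNIV::'f set). [:- \<iota> c, 1:]) = 1"
    by (simp add: lead_coeff_prod)
  have dM: "degree (monom (1::'K) q - [:0, 1:]) \<le> q"
    using q_ge2 by (intro degree_diff_le) (auto simp: degree_monom_eq)
  have "degree R \<le> q" unfolding R_def by (rule degree_diff_le[OF _ dM]) (simp add: dP)
  moreover have "coeff R q = 0" unfolding R_def using dP lP q_ge2
    by (cases q) (auto simp: coeff_pCons split: nat.splits)
  moreover have "poly R (\<iota> c) = 0" for c
  proof -
    have "poly (\<Prod>c\<in>(UNIV::'f set). [:- \<iota> c, 1:]) (\<iota> c) = 0"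
      by (simp add: poly_prod prod_zero_iff) blast
    moreover have "\<iota> c ^ q = \<iota> c" by (simp only: f_pow_card flip: ipow)
    ultimately show ?thesis unfolding R_def by (simp add: poly_monom)
  qed
  ultimately have "R = 0" by (rule few_roots)
  then have "poly R x = 0" by simp
  then show ?thesis unfolding R_def by (simp add: poly_prod poly_monom)
qed

lemma prod_i_lin2: "(\<Prod>c\<in>UNIV. Y - \<iota> c * D) = Y ^ q - D ^ (q - 1) * Y"
proof (cases "D = 0")
  case True then show ?thesis using q_ge2 by (simp add: qdef)
next
  case False
  have "(\<Prod>c\<in>UNIV. Y - \<iota> c * D) = (\<Prod>c\<in>(UNIV::'f set). D * (Y / D - \<iota> c))"
    using False by (intro prod.cong) (auto simp: field_simps)
  also have "\<dots> = D ^ q * (\<Prod>c\<in>UNIV. Y / D - \<iota> c)" by (simp add: prod.distrib qdef)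
  also have "\<dots> = D ^ q * ((Y / D) ^ q - Y / D)" by (simp only: prod_i_lin)
  also have "\<dots> = Y ^ q - D ^ (q - 1) * Y"
  proof -
    have "D ^ q = D * D ^ (q - 1)" using q_ge2 by (metis power_eq_if not_numeral_le_zero le_zero_eq)
    then show ?thesis using False by (simp add: field_simps power_divide)
  qed
  finally show ?thesis .
qed

end



context cs
begin

lemma deg_aux: fixes r :: "'a::zero poly" assumes "degree r \<le> N" "coeff r N = 0" shows "r = 0 \<or> degree r < N"
proof (cases "degree r = N")
  case True
  then have "lead_coeff r = 0" using assms(2) by simp
  then show ?thesis by simp
next
  case False then show ?thesis using assms(1) by simp
qed

lemma V_coeff: "a \<in> V N \<Longrightarrow> coeff a N = 0"
  by (auto simp: V_def coeff_eq_0)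

lemma V_deg: "a \<in> V N \<Longrightarrow> degree a \<le> N"
  by (auto simp: V_def)

lemma V_up: assumes b: "b \<in> V N" shows "b + monom c N \<in> V (Suc N)"
proof -
  have "degree (b + monom c N) \<le> N"
    using V_deg[OF b] by (intro degree_add_le) (auto simp: degree_monom_le)
  then show ?thesis by (auto simp: V_def)
qed

lemma V_down: assumes a: "a \<in> V (Suc N)" shows "a - monom (coeff a N) N \<in> V N"
proof -
  from a have "degree a \<le> N" by (auto simp: V_def)
  then have "degree (a - monom (coeff a N) N) \<le> N"
    by (intro degree_diff_le) (auto simp: degree_monom_le)
  moreover have "coeff (a - monom (coeff a N) N) N = 0" by simp
  ultimately show ?thesis using deg_aux unfolding V_def by blast
qed

lemma V_Suc_prod: "(\<Prod>a\<in>V (Suc N). h a) = (\<Prod>c\<in>UNIV. \<Prod>b\<in>V N. h (b + monom c N))"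
proof -
  let ?f = "\<lambda>(b, c). b + monom c N"
  let ?f' = "\<lambda>a. (a - monom (coeff a N) N, coeff a N)"
  have bij: "bij_betw ?f (V N \<times> UNIV) (V (Suc N))"
  proof (rule bij_betw_byWitness[where f' = ?f'])
    show "\<forall>x\<in>V N \<times> UNIV. ?f' (?f x) = x"
      by (auto simp: V_coeff)
    show "\<forall>a\<in>V (Suc N). ?f (?f' a) = a" by auto
    show "?f ` (V N \<times> UNIV) \<subseteq> V (Suc N)" using V_up by auto
    show "?f' ` V (Suc N) \<subseteq> V N \<times> UNIV" using V_down by auto
  qed
  have "(\<Prod>a\<in>V (Suc N). h a) = (\<Prod>x\<in>V N \<times> UNIV. h (?f x))"
    by (rule prod.reindex_bij_betw[OF bij, symmetric])
  also have "\<dots> = (\<Prod>b\<in>V N. \<Prod>c\<in>UNIV. h (b + monom c N))"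
    by (simp add: prod.cartesian_product split_def)
  also have "\<dots> = (\<Prod>c\<in>UNIV. \<Prod>b\<in>V N. h (b + monom c N))"
    by (rule prod.swap)
  finally show ?thesis .
qed

definition e :: "nat \<Rightarrow> 'K \<Rightarrow> 'K" where "e N z = (\<Prod>a\<in>V N. z - ev a)"

lemma e_0: "e 0 z = z"
proof -
  have "V 0 = {0}" by (auto simp: V_def)
  then show ?thesis by (simp add: e_def ev_0)
qed

lemma e_Suc: assumes "qlin N (e N)"
  shows "e (Suc N) z = e N z ^ q - e N (T ^ N) ^ (q - 1) * e N z"
proof -
  have "e (Suc N) z = (\<Prod>c\<in>UNIV. \<Prod>b\<in>V N. z - ev (b + monom c N))"
    unfolding e_def by (rule V_Suc_prod)
  also have "\<dots> = (\<Prod>c\<in>UNIV. e N (z - \<iota> c * T ^ N))"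
    unfolding e_def by (intro prod.cong refl) (simp add: ev_add ev_monom algebra_simps)
  also have "\<dots> = (\<Prod>c\<in>UNIV. e N z - \<iota> c * e N (T ^ N))"
    by (intro prod.cong refl) (simp only: qlin_diff[OF assms] qlin_smul[OF assms])
  also have "\<dots> = e N z ^ q - e N (T ^ N) ^ (q - 1) * e N z"
    by (rule prod_i_lin2)
  finally show ?thesis .
qed

lemma qlin_e: "qlin N (e N)"
proof (induction N)
  case 0
  have "e 0 z = (\<Sum>i\<le>0. 1 * z ^ (q ^ i))" for z by (simp add: e_0)
  then show ?case unfolding qlin_def by (intro exI[of _ "\<lambda>_. 1"]) blast
next
  case (Suc N)
  have "e (Suc N) = (\<lambda>z. e N z ^ q - e N (T ^ N) ^ (q - 1) * e N z)"
    using e_Suc[OF Suc] by (intro ext)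
  then show ?case using qlin_step[OF Suc] by simp
qed

definition Dn :: "nat \<Rightarrow> 'K" where "Dn N = (\<Prod>a\<in>Mon N. ev a)"

lemma Psi_eq: "Psi \<iota> T N z = e N z / Dn N"
  unfolding Psi_def e_def Dn_def V_def Mon_def ..

lemma Dn_nz: "Dn N \<noteq> 0"
proof -
  have "a \<in> Mon N \<Longrightarrow> ev a \<noteq> 0" for a
    by (rule ev_nonzero) (auto simp: Mon_def)
  then show ?thesis unfolding Dn_def using finite_Mon by (simp add: prod_zero_iff)
qed

lemma e_T_lt: assumes "m < N" shows "e N (T ^ m) = 0"
proof -
  have "monom 1 m \<in> V N" using assms by (auto simp: V_def degree_monom_eq)
  moreover have "T ^ m - ev (monom 1 m) = 0" by (simp add: ev_monom)
  ultimately show ?thesis unfolding e_def using finite_V by (auto simp: prod_zero_iff)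
qed

lemma e_T_N: "e N (T ^ N) = Dn N"
  unfolding e_def Dn_def
proof (rule prod.reindex_bij_witness[where i = "\<lambda>b. monom 1 N - b" and j = "\<lambda>a. monom 1 N - a"])
  fix a assume a: "a \<in> V N"
  show "monom 1 N - (monom 1 N - a) = a" by simp
  show "ev (monom 1 N - a) = T ^ N - ev a" by (simp add: ev_diff ev_monom)
  have c: "coeff (monom 1 N - a) N = 1" using V_coeff[OF a] by simp
  have "degree (monom 1 N - a) \<le> N"
    using V_deg[OF a] by (intro degree_diff_le) (auto simp: degree_monom_le)
  moreover have "N \<le> degree (monom 1 N - a)" using c by (intro le_degree) simp
  ultimately have "degree (monom 1 N - a) = N" by simp
  then show "monom 1 N - a \<in> Mon N" using c by (simp add: Mon_def)
next
  fix b assume b: "b \<in> Mon N"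
  show "monom 1 N - (monom 1 N - b) = b" by simp
  have "degree (monom 1 N - b) \<le> N"
    using b by (intro degree_diff_le) (auto simp: degree_monom_le Mon_def)
  moreover have "coeff (monom 1 N - b) N = 0"
  proof -
    have "lead_coeff b = 1" "degree b = N" using b by (auto simp: Mon_def)
    then have "coeff b N = 1" by (simp only:)
    then show ?thesis by simp
  qed
  ultimately show "monom 1 N - b \<in> V N" using deg_aux unfolding V_def by blast
qed

lemma qlin_Psi: "qlin N (Psi \<iota> T N)"
proof -
  obtain b where b: "\<And>z. e N z = (\<Sum>i\<le>N. b i * z ^ (q ^ i))" using qlin_e unfolding qlin_def by blast
  have "Psi \<iota> T N z = (\<Sum>i\<le>N. (b i / Dn N) * z ^ (q ^ i))" for z
    by (simp add: Psi_eq b sum_divide_distrib)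
  then show ?thesis unfolding qlin_def by (intro exI[of _ "\<lambda>i. b i / Dn N"]) blast
qed

lemma Psi_T_lt: "m < N \<Longrightarrow> Psi \<iota> T N (T ^ m) = 0"
  by (simp add: Psi_eq e_T_lt)

lemma Psi_T_N: "Psi \<iota> T N (T ^ N) = 1"
  by (simp add: Psi_eq e_T_N Dn_nz)

end



context cs
begin

definition pp :: "nat \<Rightarrow> 'K poly" where "pp N = (\<Prod>j\<in>{0..N}. [:- (T ^ (q ^ j)), 1:])"

lemma fps_pp: "fps_of_poly (pp N) = (\<Prod>j=0..N. fps_X - fps_const (T ^ (q ^ j)))"
proof -
  have fa: "fps_of_poly [:- a, 1:] = fps_X - fps_const (a::'K)" for a
    by (simp add: fps_of_poly_pCons)
  show ?thesis unfolding pp_def fps_of_poly_prod by (simp only: fa)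
qed

lemma deg_pp: "degree (pp N) = Suc N"
  unfolding pp_def by (subst degree_prod_eq_sum_degree) auto

lemma lc_pp: "coeff (pp N) (Suc N) = 1"
proof -
  have "lead_coeff (pp N) = 1" unfolding pp_def by (simp add: lead_coeff_prod)
  then show ?thesis by (simp add: deg_pp)
qed

lemma root_pp: assumes "i \<le> N" shows "poly (pp N) (T ^ (q ^ i)) = 0"
proof -
  have "poly [:- (T ^ (q ^ i)), 1:] (T ^ (q ^ i)) = 0" by simp
  then show ?thesis unfolding pp_def poly_prod using assms
    by (intro prod_zero[of "{0..N}"]) auto
qed

lemma split_sum_root:
  assumes "i \<le> N"
  shows "(\<Sum>k=0..n. coeff (pp N) k * (T ^ (q ^ i)) ^ k) = - (\<Sum>k\<in>{n<..Suc N}. coeff (pp N) k * (T ^ (q ^ i)) ^ k)"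
proof -
  let ?h = "\<lambda>k. coeff (pp N) k * (T ^ (q ^ i)) ^ k"
  have "(\<Sum>k=0..n. ?h k) + (\<Sum>k\<in>{n<..Suc N}. ?h k) = (\<Sum>k\<in>{0..n} \<union> {n<..Suc N}. ?h k)"
    by (rule sum.union_disjoint[symmetric]) auto
  also have "\<dots> = (\<Sum>k\<le>Suc N. ?h k)"
  proof (rule sum.mono_neutral_right)
    show "finite ({0..n} \<union> {n<..Suc N})" by simp
    show "{..Suc N} \<subseteq> {0..n} \<union> {n<..Suc N}" by auto
    show "\<forall>k\<in>{0..n} \<union> {n<..Suc N} - {..Suc N}. ?h k = 0"
      by (auto simp: coeff_eq_0 deg_pp)
  qed
  also have "\<dots> = poly (pp N) (T ^ (q ^ i))" by (simp add: poly_altdef deg_pp)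
  also have "\<dots> = 0" using root_pp[OF assms] .
  finally show ?thesis by (simp add: eq_neg_iff_add_eq_0)
qed

lemma carlitz_aux:
  assumes "i \<le> N"
  shows "(\<Sum>k=0..n. coeff (pp N) k * inverse (T ^ (q ^ i)) ^ (n - k + 1))
       = - (\<Sum>k\<in>{n<..Suc N}. coeff (pp N) k * (T ^ (q ^ i)) ^ (k - n - 1))"
proof -
  define th where "th = T ^ (q ^ i)"
  have th0: "th \<noteq> 0" unfolding th_def using T_ne0 by simp
  have a: "inverse th ^ (n - k + 1) = inverse th ^ (n + 1) * th ^ k" if "k \<le> n" for k
  proof -
    have "inverse th ^ (n + 1) * th ^ k = inverse th ^ (n - k + 1) * (inverse th ^ k * th ^ k)"
      using that by (simp add: power_add[symmetric] mult.assoc)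
    also have "inverse th ^ k * th ^ k = 1" using th0 by (simp add: power_mult_distrib[symmetric])
    finally have "inverse th ^ (n + 1) * th ^ k = inverse th ^ (n - k + 1)" by (simp only: mult_1_right)
    then show ?thesis by (rule sym)
  qed
  have b: "th ^ (k - n - 1) = inverse th ^ (n + 1) * th ^ k" if "n < k" for k
  proof -
    have kk: "k = (n + 1) + (k - n - 1)" using that by simp
    have "th ^ k = th ^ (n + 1) * th ^ (k - n - 1)"
      by (subst kk) (simp only: power_add)
    then have "inverse th ^ (n + 1) * th ^ k = (inverse th ^ (n + 1) * th ^ (n + 1)) * th ^ (k - n - 1)"
      by (simp only: mult.assoc)
    also have "inverse th ^ (n + 1) * th ^ (n + 1) = 1"
      by (simp only: power_mult_distrib[symmetric] left_inverse[OF th0] power_one)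
    finally have "inverse th ^ (n + 1) * th ^ k = th ^ (k - n - 1)" by (simp only: mult_1_left)
    then show ?thesis by (rule sym)
  qed
  have "(\<Sum>k=0..n. coeff (pp N) k * inverse th ^ (n - k + 1))
      = (\<Sum>k=0..n. inverse th ^ (n + 1) * (coeff (pp N) k * th ^ k))"
  proof (rule sum.cong[OF refl])
    fix k assume "k \<in> {0..n}"
    then have "k \<le> n" by simp
    then show "coeff (pp N) k * inverse th ^ (n - k + 1) = inverse th ^ (n + 1) * (coeff (pp N) k * th ^ k)"
      by (simp only: a mult.left_commute)
  qed
  also have "\<dots> = inverse th ^ (n + 1) * (\<Sum>k=0..n. coeff (pp N) k * th ^ k)"
    by (simp only: sum_distrib_left)
  also have "\<dots> = - (inverse th ^ (n + 1) * (\<Sum>k\<in>{n<..Suc N}. coeff (pp N) k * th ^ k))"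
    using split_sum_root[OF assms, of n] unfolding th_def by simp
  also have "\<dots> = - (\<Sum>k\<in>{n<..Suc N}. inverse th ^ (n + 1) * (coeff (pp N) k * th ^ k))"
    by (simp only: sum_distrib_left)
  also have "(\<Sum>k\<in>{n<..Suc N}. inverse th ^ (n + 1) * (coeff (pp N) k * th ^ k))
      = (\<Sum>k\<in>{n<..Suc N}. coeff (pp N) k * th ^ (k - n - 1))"
  proof (rule sum.cong[OF refl])
    fix k assume "k \<in> {n<..Suc N}"
    then have "n < k" by simp
    then show "inverse th ^ (n + 1) * (coeff (pp N) k * th ^ k) = coeff (pp N) k * th ^ (k - n - 1)"
      by (simp only: b mult.left_commute)
  qed
  finally show ?thesis unfolding th_def .
qed

definition Fc :: "nat \<Rightarrow> nat \<Rightarrow> 'K" where "Fc N n = - Psi \<iota> T N (inverse (T ^ (n + 1)))"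

lemma carlitz: "fps_of_poly (pp N) * Abs_fps (Fc N) = 1"
proof (rule fps_ext)
  fix n
  obtain b where b: "\<And>z. Psi \<iota> T N z = (\<Sum>i\<le>N. b i * z ^ (q ^ i))"
    using qlin_Psi unfolding qlin_def by blast
  let ?c = "coeff (pp N)"
  let ?th = "\<lambda>i. T ^ (q ^ i)"
  have Fc_eq: "Fc N m = - (\<Sum>i\<le>N. b i * inverse (?th i) ^ (m + 1))" for m
  proof -
    have "inverse (T ^ (m + 1)) ^ (q ^ i) = inverse (?th i) ^ (m + 1)" for i
      by (simp only: power_inverse power_mult[symmetric] mult.commute)
    then show ?thesis unfolding Fc_def b by simp
  qed
  have PsiT: "Psi \<iota> T N (T ^ m) = (\<Sum>i\<le>N. b i * ?th i ^ m)" for m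
    by (simp add: b power_mult[symmetric] mult.commute)
  have "(fps_of_poly (pp N) * Abs_fps (Fc N)) $ n = (\<Sum>k=0..n. ?c k * Fc N (n - k))"
    by (simp add: fps_mult_nth)
  also have "\<dots> = - (\<Sum>i\<le>N. b i * (\<Sum>k=0..n. ?c k * inverse (?th i) ^ (n - k + 1)))"
    unfolding Fc_eq
    by (simp add: sum_distrib_left sum_negf mult.left_commute sum.swap[of _ "{0..n}"])
  also have "\<dots> = - (\<Sum>i\<le>N. - (b i * (\<Sum>k\<in>{n<..Suc N}. ?c k * ?th i ^ (k - n - 1))))"
  proof -
    have "(\<Sum>i\<le>N. b i * (\<Sum>k=0..n. ?c k * inverse (?th i) ^ (n - k + 1)))
        = (\<Sum>i\<le>N. - (b i * (\<Sum>k\<in>{n<..Suc N}. ?c k * ?th i ^ (k - n - 1))))"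
    proof (rule sum.cong[OF refl])
      fix i assume "i \<in> {..N}"
      then have "i \<le> N" by simp
      then show "b i * (\<Sum>k=0..n. ?c k * inverse (?th i) ^ (n - k + 1))
        = - (b i * (\<Sum>k\<in>{n<..Suc N}. ?c k * ?th i ^ (k - n - 1)))"
        by (simp only: carlitz_aux mult_minus_right)
    qed
    then show ?thesis by (rule arg_cong)
  qed
  also have "\<dots> = (\<Sum>i\<le>N. b i * (\<Sum>k\<in>{n<..Suc N}. ?c k * ?th i ^ (k - n - 1)))"
    by (simp only: sum_negf minus_minus)
  also have "\<dots> = (\<Sum>k\<in>{n<..Suc N}. ?c k * Psi \<iota> T N (T ^ (k - n - 1)))"
    unfolding PsiT by (simp add: sum_distrib_left mult.left_commute sum.swap[of _ "{..N}"])
  also have "\<dots> = (if n = 0 then 1 else 0)"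
  proof (cases "n = 0")
    case False
    have "?c k * Psi \<iota> T N (T ^ (k - n - 1)) = 0" if "k \<in> {n<..Suc N}" for k
    proof -
      have "k - n - 1 < N" using that False by auto
      then show ?thesis by (simp add: Psi_T_lt)
    qed
    then have "(\<Sum>k\<in>{n<..Suc N}. ?c k * Psi \<iota> T N (T ^ (k - n - 1))) = 0"
      by (intro sum.neutral) blast
    then show ?thesis using False by simp
  next
    case True
    have "(\<Sum>k\<in>{n<..Suc N}. ?c k * Psi \<iota> T N (T ^ (k - n - 1)))
        = ?c (Suc N) * Psi \<iota> T N (T ^ (Suc N - n - 1))
          + (\<Sum>k\<in>{n<..Suc N} - {Suc N}. ?c k * Psi \<iota> T N (T ^ (k - n - 1)))"
      using True by (intro sum.remove) auto
    also have "(\<Sum>k\<in>{n<..Suc N} - {Suc N}. ?c k * Psi \<iota> T N (T ^ (k - n - 1))) = 0"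
      using True by (intro sum.neutral) (auto simp: Psi_T_lt)
    finally show ?thesis using True by (simp add: lc_pp Psi_T_N)
  qed
  finally show "(fps_of_poly (pp N) * Abs_fps (Fc N)) $ n = 1 $ n" by simp
qed

end



lemma fps_div_eqI:
  fixes x y z :: "'a::field fps"
  assumes "y $ 0 \<noteq> 0" "x = z * y"
  shows "x / y = z"
proof -
  have "x / y = x * inverse y" using assms(1) by (rule fps_divide_unit)
  also have "\<dots> = z * (y * inverse y)" using assms(2) by (simp add: mult.assoc)
  also have "y * inverse y = 1" using assms(1) by (rule inverse_mult_eq_1')
  finally show ?thesis by simp
qed

lemma lin_factor:
  fixes a u :: "'a::field"
  assumes "u \<noteq> 0"
  shows "fps_const a * (1 - fps_const (inverse u) * fps_X) = fps_const (a * - inverse u) * (fps_X - fps_const u)"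
proof (rule fps_ext)
  fix n
  show "(fps_const a * (1 - fps_const (inverse u) * fps_X)) $ n = (fps_const (a * - inverse u) * (fps_X - fps_const u)) $ n"
    using assms by (cases n) (simp_all add: fps_X_nth field_simps)
qed

context cs
begin

context
  fixes Tt :: 'K
  assumes Tt: "Tt ^ (q - 1) = - T"
begin

lemma Tt_ne0: "Tt \<noteq> 0"
proof
  assume z: "Tt = 0"
  have "(0::'K) ^ (q - 1) = 0" using q_ge2 by simp
  then have "Tt ^ (q - 1) = 0" by (simp only: z)
  then have "- T = 0" by (simp only: Tt)
  then have "T = 0" by simp
  then show False using T_ne0 by simp
qed

lemma baseY: "inverse Tt * (- inverse T) = inverse (Tt ^ q)"
proof -
  have "- inverse T = inverse (Tt ^ (q - 1))" using Tt by simp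
  then have "inverse Tt * (- inverse T) = inverse (Tt * Tt ^ (q - 1))" by (simp add: inverse_mult_distrib)
  also have "Tt * Tt ^ (q - 1) = Tt ^ q"
  proof -
    have qq: "Suc (q - 1) = q" using q_ge2 by simp
    have "Tt * Tt ^ (q - 1) = Tt ^ Suc (q - 1)" by (simp only: power_Suc)
    then show ?thesis by (simp only: qq)
  qed
  finally show ?thesis .
qed

lemma alpha_step: "inverse (Tt ^ q) ^ (q ^ n) * (- inverse (T ^ (q ^ Suc n))) = inverse (Tt ^ q) ^ (q ^ Suc n)"
proof -
  have "(inverse Tt * (- inverse T)) ^ (q ^ Suc n) = inverse (Tt ^ q) ^ (q ^ Suc n)" by (simp only: baseY)
  moreover have "(inverse Tt * (- inverse T)) ^ (q ^ Suc n) = inverse Tt ^ (q ^ Suc n) * (- (inverse T ^ (q ^ Suc n)))"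
    by (simp only: power_mult_distrib frobn_minus)
  moreover have "inverse Tt ^ (q ^ Suc n) = inverse (Tt ^ q) ^ (q ^ n)"
    by (simp only: power_Suc power_mult power_inverse)
  moreover have "inverse T ^ (q ^ Suc n) = inverse (T ^ (q ^ Suc n))" by (rule power_inverse)
  ultimately show ?thesis by simp
qed

lemma beta: "frob q (-1) (inverse (Tt ^ q)) = inverse Tt"
proof -
  have "frob q (- int 1) (inverse (Tt ^ q)) = inverse Tt"
    by (simp only: frob_neg_iff) (simp add: power_inverse)
  then show ?thesis by simp
qed

lemma claim_pos: "fps_const (inverse Tt) * W (-1) (Suc n) = fps_const (inverse (Tt ^ q) ^ (q ^ n)) * fps_of_poly (pp n)"
proof (induction n)
  case 0
  have g0: "g (-1 + int (Suc 0)) = inverse T" by (simp add: g_def frob_def)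
  have "W (-1) (Suc 0) = 1 - fps_const (inverse T) * fps_X"
    using W_Suc[of "-1" 0] g0 by (simp add: W_def)
  then have "fps_const (inverse Tt) * W (-1) (Suc 0) = fps_const (inverse Tt * - inverse T) * (fps_X - fps_const T)"
    using lin_factor[OF T_ne0, of "inverse Tt"] by simp
  also have "\<dots> = fps_const (inverse (Tt ^ q) ^ (q ^ 0)) * fps_of_poly (pp 0)"
    by (simp only: baseY power_0 power_one_right fps_pp) simp
  finally show ?case .
next
  case (Suc n)
  let ?th = "T ^ (q ^ Suc n)"
  have th0: "?th \<noteq> 0" using T_ne0 by simp
  have gs: "g (-1 + int (Suc (Suc n))) = inverse ?th"
  proof -
    have e: "-1 + int (Suc (Suc n)) = int (Suc n)" by simp
    show ?thesis by (simp only: e g_def frob_nat power_inverse)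
  qed
  have "fps_const (inverse Tt) * W (-1) (Suc (Suc n))
      = (fps_const (inverse Tt) * W (-1) (Suc n)) * (1 - fps_const (inverse ?th) * fps_X)"
    by (simp only: W_Suc gs mult.assoc)
  also have "\<dots> = fps_of_poly (pp n) * (fps_const (inverse (Tt ^ q) ^ (q ^ n)) * (1 - fps_const (inverse ?th) * fps_X))"
    by (simp only: Suc.IH mult.commute mult.left_commute)
  also have "\<dots> = fps_of_poly (pp n) * (fps_const (inverse (Tt ^ q) ^ (q ^ Suc n)) * (fps_X - fps_const ?th))"
    by (simp only: lin_factor[OF th0] alpha_step)
  also have "\<dots> = fps_const (inverse (Tt ^ q) ^ (q ^ Suc n)) * fps_of_poly (pp (Suc n))"
    by (simp add: fps_pp prod.atLeast0_atMost_Suc mult.commute mult.left_commute)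
  finally show ?case .
qed

lemma main_pos: "twist q (int n) (Omega absK q T Tt) / twist q (-1) (Omega absK q T Tt)
   = Abs_fps (\<lambda>m. - Psi \<iota> T n (inverse (T ^ (m + 1))))"
proof (rule fps_div_eqI)
  let ?B = "Abs_fps (Mf (int n))"
  let ?a = "inverse (Tt ^ q) ^ (q ^ n)"
  have rel: "Abs_fps (Mf (-1)) = W (-1) (Suc n) * ?B"
    using Mf_rel[of "-1" "Suc n"] by simp
  have y: "twist q (-1) (Omega absK q T Tt) = fps_const ?a * fps_of_poly (pp n) * ?B"
    by (simp only: twist_Omega beta rel mult.assoc[symmetric] claim_pos)
  have x: "twist q (int n) (Omega absK q T Tt) = fps_const ?a * ?B"
    by (simp add: twist_Omega)
  have c: "fps_of_poly (pp n) * Abs_fps (Fc n) = 1" by (rule carlitz)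
  have F: "Abs_fps (\<lambda>m. - Psi \<iota> T n (inverse (T ^ (m + 1)))) = Abs_fps (Fc n)"
    by (intro arg_cong[where f = Abs_fps] ext) (simp only: Fc_def)
  show "twist q (int n) (Omega absK q T Tt) = Abs_fps (\<lambda>m. - Psi \<iota> T n (inverse (T ^ (m + 1)))) * twist q (-1) (Omega absK q T Tt)"
    unfolding x y F using c by (simp add: mult.commute mult.left_commute)
  have "fps_of_poly (pp n) $ 0 \<noteq> 0"
  proof
    assume "fps_of_poly (pp n) $ 0 = 0"
    then have "(fps_of_poly (pp n) * Abs_fps (Fc n)) $ 0 = 0" by simp
    then show False using c by simp
  qed
  moreover have "?a \<noteq> 0" using Tt_ne0 by simp
  ultimately show "twist q (-1) (Omega absK q T Tt) $ 0 \<noteq> 0"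
    unfolding y by (simp add: Mf_0)
qed

lemma tele: "frob q (- int (Suc (Suc m))) (inverse (Tt ^ q)) * (- inverse (frob q (- int (Suc m)) T))
   = frob q (- int (Suc m)) (inverse (Tt ^ q))"
proof -
  let ?k = "Suc m"
  have "frob q (- int ?k) (inverse Tt * (- inverse T)) = frob q (- int ?k) (inverse (Tt ^ q))"
    by (simp only: baseY)
  then have h: "frob q (- int ?k) (inverse Tt) * (- inverse (frob q (- int ?k) T)) = frob q (- int ?k) (inverse (Tt ^ q))"
    by (simp only: frob_mult frob_minus frob_inverse)
  have "frob q (- int (Suc ?k)) (inverse (Tt ^ q)) = frob q (- int ?k) (inverse Tt)"
  proof -
    have "frob q (- int ?k) (inverse Tt) ^ (q ^ Suc ?k) = (frob q (- int ?k) (inverse Tt) ^ (q ^ ?k)) ^ q"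
      by (simp only: pow_q_Suc)
    also have "\<dots> = inverse (Tt ^ q)" by (simp only: frob_neg_pow power_inverse)
    finally show ?thesis by (simp only: frob_neg_iff)
  qed
  then show ?thesis using h by simp
qed

lemma claim_neg: "fps_const (frob q (- int (Suc m)) (inverse (Tt ^ q))) * W (- int (Suc m)) m
   = fps_const (inverse Tt) * (\<Prod>i=1..m. fps_X - fps_const (frob q (- int i) T))"
proof (induction m)
  case 0
  have "frob q (- int (Suc 0)) (inverse (Tt ^ q)) = inverse Tt" using beta by simp
  then show ?case by (simp add: W_def)
next
  case (Suc m)
  let ?u = "frob q (- int (Suc m)) T"
  have u0: "?u \<noteq> 0" using T_ne0 by simp
  have gs: "g (- int (Suc (Suc m)) + int 1) = inverse ?u"
  proof -
    have "- int (Suc (Suc m)) + int 1 = - int (Suc m)" by simp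
    then show ?thesis by (simp add: g_def frob_inverse)
  qed
  have sh: "- int (Suc (Suc m)) + int 1 = - int (Suc m)" by simp
  have "W (- int (Suc (Suc m))) (Suc m) = W (- int (Suc (Suc m))) (m + 1)" by simp
  also have "\<dots> = W (- int (Suc (Suc m))) 1 * W (- int (Suc (Suc m)) + int 1) m" by (rule W_shift)
  also have "\<dots> = W (- int (Suc (Suc m))) 1 * W (- int (Suc m)) m" by (simp only: sh)
  finally have "W (- int (Suc (Suc m))) (Suc m) = W (- int (Suc (Suc m))) 1 * W (- int (Suc m)) m" .
  moreover have "W (- int (Suc (Suc m))) 1 = 1 - fps_const (inverse ?u) * fps_X"
    using gs by (simp add: W_def)
  ultimately have "fps_const (frob q (- int (Suc (Suc m))) (inverse (Tt ^ q))) * W (- int (Suc (Suc m))) (Suc m)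
     = (fps_const (frob q (- int (Suc (Suc m))) (inverse (Tt ^ q))) * (1 - fps_const (inverse ?u) * fps_X)) * W (- int (Suc m)) m"
    by (simp only: mult.assoc)
  also have "\<dots> = (fps_const (frob q (- int (Suc m)) (inverse (Tt ^ q))) * (fps_X - fps_const ?u)) * W (- int (Suc m)) m"
    by (simp only: lin_factor[OF u0] tele)
  also have "\<dots> = (fps_X - fps_const ?u) * (fps_const (frob q (- int (Suc m)) (inverse (Tt ^ q))) * W (- int (Suc m)) m)"
    by (simp only: mult.commute mult.left_commute)
  also have "\<dots> = fps_const (inverse Tt) * (\<Prod>i=1..Suc m. fps_X - fps_const (frob q (- int i) T))"
    by (simp only: Suc.IH) (simp add: prod.nat_ivl_Suc' mult.commute mult.left_commute)
  finally show ?case .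
qed

lemma main_neg: "twist q (- int (Suc m)) (Omega absK q T Tt) / twist q (-1) (Omega absK q T Tt)
   = (\<Prod>i=1..m. fps_X - fps_const (frob q (- int i) T))"
proof (rule fps_div_eqI)
  let ?B = "Abs_fps (Mf (-1))"
  have sh: "- int (Suc m) + int m = -1" by simp
  have rel: "Abs_fps (Mf (- int (Suc m))) = W (- int (Suc m)) m * ?B"
    using Mf_rel[of "- int (Suc m)" m] by (simp only: sh)
  have y: "twist q (-1) (Omega absK q T Tt) = fps_const (inverse Tt) * ?B"
    by (simp only: twist_Omega beta)
  show "twist q (- int (Suc m)) (Omega absK q T Tt) = (\<Prod>i=1..m. fps_X - fps_const (frob q (- int i) T)) * twist q (-1) (Omega absK q T Tt)"
    by (simp only: y twist_Omega beta rel mult.assoc[symmetric] claim_neg) (simp only: mult.commute mult.left_commute)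
  show "twist q (-1) (Omega absK q T Tt) $ 0 \<noteq> 0"
    unfolding y using Tt_ne0 by (simp add: Mf_0)
qed

end
end



theorem lemma5:
  fixes \<iota> :: "'f::{field,finite} \<Rightarrow> 'K::field"
    and T Tt :: 'K and absK :: "'K \<Rightarrow> real" and N :: int
  assumes "Cinf_setting \<iota> T absK"
    and "Tt ^ (CARD('f) - 1) = - T"
  shows "(N \<ge> 0 \<longrightarrow>
            twist CARD('f) N (Omega absK CARD('f) T Tt) / twist CARD('f) (-1) (Omega absK CARD('f) T Tt)
              = Abs_fps (\<lambda>n. - Psi \<iota> T (nat N) (inverse (T ^ (n + 1)))))
       \<and> (N < 0 \<longrightarrow>
            twist CARD('f) N (Omega absK CARD('f) T Tt) / twist CARD('f) (-1) (Omega absK CARD('f) T Tt)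
              = (\<Prod>i=1..nat (- N) - 1. fps_X - fps_const (frob CARD('f) (- int i) T)))"
proof -
  interpret cs \<iota> T absK "CARD('f)"
    by unfold_locales (rule assms(1), rule refl)
  note Tt = assms(2)
  show ?thesis
  proof (intro conjI impI)
    assume "N \<ge> 0"
    define n where "n = nat N"
    have N: "N = int n" unfolding n_def using \<open>N \<ge> 0\<close> by simp
    have nN: "nat N = n" using N by simp
    show "twist CARD('f) N (Omega absK CARD('f) T Tt) / twist CARD('f) (-1) (Omega absK CARD('f) T Tt)
              = Abs_fps (\<lambda>n. - Psi \<iota> T (nat N) (inverse (T ^ (n + 1))))"
      unfolding nN unfolding N by (rule main_pos[OF Tt])
  next
    assume "N < 0"
    define m where "m = nat (- N) - 1"
    have N: "N = - int (Suc m)" unfolding m_def using \<open>N < 0\<close> by simp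
    have nN: "nat (- N) - 1 = m" using N by simp
    show "twist CARD('f) N (Omega absK CARD('f) T Tt) / twist CARD('f) (-1) (Omega absK CARD('f) T Tt)
              = (\<Prod>i=1..nat (- N) - 1. fps_X - fps_const (frob CARD('f) (- int i) T))"
      unfolding nN unfolding N by (rule main_neg[OF Tt])
  qed
qed

end
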